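(* Let $A$ and $B$ be C$^*$-algebras, where $A$ is unital, simple and infinite. Let $T:A\to B$ be a linear map. Then $T$ is a $^*$-homomorphism if and only if $T$ is a $^*$-homomorphism at the unit $1$ of $A$.
   Context: A map $T:A\to B$ between C$^*$-algebras is a $^*$-homomorphism at $z\in A$ if for all $a,b\in A$ with $ab^*=z$ one has $T(ab^* )=T(a)T(b)^*=T(z)$, and for all $c,d\in A$ with $c^*d=z$ one has $T(c^*d)=T(c)^*T(d)=T(z)$. A unital C$^*$-algebra is infinite if its unit is not a finite projection (equivalently, it contains a projection that is Murray–von Neumann equivalent to a proper subprojection of itself). Simple means $A$ has no nontrivial norm-closed two-sided ideals. *)

theory Defs
  imports "HOL-Analysis.Analysis"
begin

text \<open>The real scalar multiplication
inherited from real_normed_algebra is required to agree with the complex one.\<close>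

class cstar_algebra = real_normed_algebra + banach +
  fixes scaleC :: "complex \<Rightarrow> 'a \<Rightarrow> 'a"
    and cstar :: "'a \<Rightarrow> 'a"
  assumes scaleC_add_right: "scaleC c (x + y) = scaleC c x + scaleC c y"
    and scaleC_add_left: "scaleC (c + d) x = scaleC c x + scaleC d x"
    and scaleC_scaleC: "scaleC c (scaleC d x) = scaleC (c * d) x"
    and scaleC_one: "scaleC 1 x = x"
    and scaleR_scaleC: "scaleR r x = scaleC (complex_of_real r) x"
    and norm_scaleC: "norm (scaleC c x) = cmod c * norm x"
    and scaleC_mult_left: "scaleC c (x * y) = scaleC c x * y"
    and scaleC_mult_right: "scaleC c (x * y) = x * scaleC c y"
    and cstar_cstar: "cstar (cstar x) = x"
    and cstar_add: "cstar (x + y) = cstar x + cstar y"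
    and cstar_scaleC: "cstar (scaleC c x) = scaleC (cnj c) (cstar x)"
    and cstar_mult: "cstar (x * y) = cstar y * cstar x"
    and cstar_identity: "norm (cstar x * x) = (norm x)^2"

class cstar_algebra_1 = cstar_algebra + real_normed_algebra_1

definition clinear_map :: "('a::cstar_algebra \<Rightarrow> 'b::cstar_algebra) \<Rightarrow> bool" where
  "clinear_map T \<longleftrightarrow> (\<forall>x y. T (x + y) = T x + T y) \<and> (\<forall>c x. T (scaleC c x) = scaleC c (T x))"

definition star_hom :: "('a::cstar_algebra \<Rightarrow> 'b::cstar_algebra) \<Rightarrow> bool" where
  "star_hom T \<longleftrightarrow> clinear_map T \<and> (\<forall>x y. T (x * y) = T x * T y) \<and> (\<forall>x. T (cstar x) = cstar (T x))"

definition star_hom_at :: "('a::cstar_algebra \<Rightarrow> 'b::cstar_algebra) \<Rightarrow> 'a \<Rightarrow> bool" where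
  "star_hom_at T z \<longleftrightarrow>
     (\<forall>a b. a * cstar b = z \<longrightarrow> T (a * cstar b) = T a * cstar (T b) \<and> T a * cstar (T b) = T z) \<and>
     (\<forall>c d. cstar c * d = z \<longrightarrow> T (cstar c * d) = cstar (T c) * T d \<and> cstar (T c) * T d = T z)"

definition closed_ideal :: "'a::cstar_algebra set \<Rightarrow> bool" where
  "closed_ideal I \<longleftrightarrow> 0 \<in> I \<and> (\<forall>x\<in>I. \<forall>y\<in>I. x + y \<in> I) \<and> (\<forall>c. \<forall>x\<in>I. scaleC c x \<in> I)
     \<and> (\<forall>a. \<forall>x\<in>I. a * x \<in> I \<and> x * a \<in> I) \<and> closed I"

definition cstar_simple :: "'a::cstar_algebra itself \<Rightarrow> bool" where
  "cstar_simple _ \<longleftrightarrow> (\<forall>I::'a set. closed_ideal I \<longrightarrow> I = {0} \<or> I = UNIV)"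

definition projection :: "'a::cstar_algebra \<Rightarrow> bool" where
  "projection p \<longleftrightarrow> p * p = p \<and> cstar p = p"

definition mvn_equiv :: "'a::cstar_algebra \<Rightarrow> 'a \<Rightarrow> bool" where
  "mvn_equiv p q \<longleftrightarrow> (\<exists>v. cstar v * v = p \<and> v * cstar v = q)"

definition subprojection :: "'a::cstar_algebra \<Rightarrow> 'a \<Rightarrow> bool" where
  "subprojection q p \<longleftrightarrow> projection q \<and> projection p \<and> q * p = q"

definition finite_projection :: "'a::cstar_algebra \<Rightarrow> bool" where
  "finite_projection p \<longleftrightarrow> projection p \<and>
     (\<forall>q. subprojection q p \<and> mvn_equiv p q \<longrightarrow> q = p)"

definition cstar_infinite :: "'a::cstar_algebra_1 itself \<Rightarrow> bool" where
  "cstar_infinite _ \<longleftrightarrow> \<not> finite_projection (1::'a)"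

end

theory Submission
  imports Defs
begin


locale pq =
  fixes P Q :: "'a::ring_1 \<Rightarrow> 'b::real_algebra" and k :: 'b
  assumes addP: "\<And>x y. P (x + y) = P x + P y"
    and addQ: "\<And>x y. Q (x + y) = Q x + Q y"
    and R: "\<And>a b. a * b = 1 \<Longrightarrow> P a * Q b = k"
begin

lemma P0: "P 0 = 0" using addP[of 0 0] by simp
lemma Q0: "Q 0 = 0" using addQ[of 0 0] by simp
lemma Pneg: "P (- x) = - P x" using addP[of x "-x"] P0 by (metis neg_eq_iff_add_eq_0 add.right_inverse)
lemma Qneg: "Q (- x) = - Q x" using addQ[of x "-x"] Q0 by (metis neg_eq_iff_add_eq_0 add.right_inverse)
lemma Pdiff: "P (x - y) = P x - P y" using addP[of x "-y"] Pneg[of y] by simp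
lemma Qdiff: "Q (x - y) = Q x - Q y" using addQ[of x "-y"] Qneg[of y] by simp

lemma lamb: assumes "a0 * b0 = 1" "X * b0 = 0" shows "P X * Q b0 = 0"
proof -
  have "(a0 + X) * b0 = 1" using assms by (simp add: distrib_right)
  hence "P (a0 + X) * Q b0 = k" by (rule R)
  moreover have "P a0 * Q b0 = k" using assms R by blast
  ultimately show ?thesis by (simp add: addP distrib_right)
qed

lemma mu: assumes "a0 * b0 = 1" "a0 * Y = 0" shows "P a0 * Q Y = 0"
proof -
  have "a0 * (b0 + Y) = 1" using assms by (simp add: distrib_left)
  hence "P a0 * Q (b0 + Y) = k" by (rule R)
  moreover have "P a0 * Q b0 = k" using assms R by blast
  ultimately show ?thesis by (simp add: addQ distrib_left)
qed

lemma two0: "(z::'b) + z = 0 \<Longrightarrow> z = 0"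
  by (metis scaleR_2 scaleR_eq_0_iff zero_neq_numeral)

lemma DE: assumes h: "a0 * b0 = 1" "X * b0 = 0" "a0 * Y = 0"
  shows "P X * Q Y = P (X * Y * a0) * Q b0" and "P (X * Y * a0) * Q Y = 0"
proof -
  define W where "W = X * Y * a0"
  have Wb: "W * b0 = X * Y" unfolding W_def using h by (simp add: mult.assoc)
  have WY: "W * Y = 0" unfolding W_def using h by (simp add: mult.assoc)
  have e1: "(a0 + X - W) * (b0 + Y) = 1"
    using h Wb WY by (simp add: algebra_simps)
  have e2: "(a0 + X + W) * (b0 - Y) = 1"
    using h Wb WY by (simp add: algebra_simps)
  have k0: "P a0 * Q b0 = k" using h R by blast
  have x0: "P X * Q b0 = 0" using lamb h by blast
  have y0: "P a0 * Q Y = 0" using mu h by blast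
  have f1: "P (a0 + X - W) * Q (b0 + Y) = k" using e1 R by blast
  have f2: "P (a0 + X + W) * Q (b0 - Y) = k" using e2 R by blast
  have g1: "P X * Q Y - P W * Q b0 - P W * Q Y = 0"
    using f1 k0 x0 y0 by (simp add: addP addQ Pdiff algebra_simps)
  have g2: "- (P X * Q Y) + P W * Q b0 - P W * Q Y = 0"
    using f2 k0 x0 y0 by (simp add: addP addQ Qdiff algebra_simps)
  have "(- (P W * Q Y)) + (- (P W * Q Y)) = (P X * Q Y - P W * Q b0 - P W * Q Y) + (- (P X * Q Y) + P W * Q b0 - P W * Q Y)"
    by (simp add: algebra_simps)
  also have "\<dots> = 0" by (simp only: g1 g2 add_0)
  finally have "(- (P W * Q Y)) + (- (P W * Q Y)) = 0" .
  hence "- (P W * Q Y) = 0" by (rule two0)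
  hence E: "P W * Q Y = 0" by simp
  show "P (X * Y * a0) * Q Y = 0" using E unfolding W_def .
  from g1 E have "P X * Q Y = P W * Q b0" by simp
  thus "P X * Q Y = P (X * Y * a0) * Q b0" unfolding W_def .
qed


context
  fixes u1 v1 u2 v2 :: 'a
  assumes o11: "u1 * v1 = 1" and o22: "u2 * v2 = 1" and o12: "u1 * v2 = 0" and o21: "u2 * v1 = 0"
begin

lemma oo1: "u1 * (v2 * y) = 0" "u2 * (v1 * y) = 0" "u1 * (v1 * y) = y" "u2 * (v2 * y) = y"
  by (simp_all add: o11 o12 o21 o22 flip: mult.assoc)
lemma oo2: "x * u1 * v2 = 0" "x * u2 * v1 = 0" "x * u1 * v1 = x" "x * u2 * v2 = x"
  by (simp_all add: o11 o12 o21 o22 mult.assoc)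
lemma K2: "P (x * u2) * Q (v2 * y) = P (x * y * u1) * Q v1"
proof -
  have "P (x * u2) * Q (v2 * y) = P (x * u2 * (v2 * y) * u1) * Q v1"
    by (rule DE(1)) (simp_all add: oo1 oo2 o11 o22 o12 o21)
  also have "x * u2 * (v2 * y) * u1 = x * y * u1"
    by (metis mult.assoc mult.right_neutral o22)
  finally show ?thesis .
qed

lemma C1: "P (w * u2) * Q (v1 * z) = 0"
proof -
  have E: "P (w * y * u2) * Q (v1 * y) = 0" for y
  proof -
    have "P (w * u1 * (v1 * y) * u2) * Q (v1 * y) = 0"
      by (rule DE(2)[of u2 v2]) (simp_all add: o22 oo1 oo2)
    moreover have "w * u1 * (v1 * y) * u2 = w * y * u2"
      by (metis mult.assoc mult.right_neutral o11)
    ultimately show ?thesis by simp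
  qed
  have L: "P (w * z * u2) * Q v1 = 0"
    by (rule lamb[of u1]) (simp_all add: o11 o21 mult.assoc)
  have "P (w * (1 + z) * u2) * Q (v1 * (1 + z)) = 0" by (rule E)
  hence "P (w * u2) * Q v1 + P (w * u2) * Q (v1 * z) + P (w * z * u2) * Q v1
        + P (w * z * u2) * Q (v1 * z) = 0"
    by (simp add: algebra_simps addP addQ)
  thus ?thesis using E[of 1] E[of z] L by simp
qed

lemma T2: assumes "X * v1 = 0" shows "P X * Q (v1 * z) = 0"
proof -
  define X' where "X' = X - X * v2 * u2"
  have X'1: "X' * v1 = 0" unfolding X'_def using assms o21 by (simp add: algebra_simps mult.assoc)
  have X'2: "X' * v2 = 0" unfolding X'_def using o22 by (simp add: algebra_simps mult.assoc)
  have a: "u2 * (v2 + v1 * z) = 1" using o22 o21 by (simp add: distrib_left flip: mult.assoc)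
  have "P X' * Q (v2 + v1 * z) = 0"
    by (rule lamb[OF a]) (simp add: distrib_left X'1 X'2 flip: mult.assoc)
  moreover have "P X' * Q v2 = 0" by (rule lamb[OF o22 X'2])
  ultimately have N: "P X' * Q (v1 * z) = 0" by (simp add: addQ distrib_left)
  have "X = X' + (X * v2) * u2" unfolding X'_def by (simp add: mult.assoc)
  hence "P X = P X' + P ((X * v2) * u2)" using addP by metis
  thus ?thesis using N C1[of "X * v2" z] by (simp add: distrib_right)
qed

end

context
  fixes u1 v1 u2 v2 :: 'a
  assumes o11: "u1 * v1 = 1" and o22: "u2 * v2 = 1" and o12: "u1 * v2 = 0" and o21: "u2 * v1 = 0"
begin

lemma K1: "P (x * u1) * Q (v1 * y) = P (x * y * u1) * Q v1"
proof -
  have "P (x * u1) * Q (v1 * y) = P (x * y * u2) * Q v2" by (rule K2[OF o22 o11 o21 o12])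
  also have "\<dots> = P (x * y * u1) * Q v1" using K2[OF o11 o22 o12 o21, of "x * y" 1] by simp
  finally show ?thesis .
qed

lemma C2: "P (w * u1) * Q (v2 * z) = 0" by (rule C1[OF o22 o11 o21 o12])

lemma T3: assumes "u1 * Y = 0" shows "P (w * u1) * Q Y = 0"
proof -
  define Y' where "Y' = Y - v2 * (u2 * Y)"
  have Y1: "u1 * Y' = 0" unfolding Y'_def using assms
    by (simp add: right_diff_distrib o12 flip: mult.assoc)
  have Y2: "u2 * Y' = 0" unfolding Y'_def
    by (simp add: right_diff_distrib o22 flip: mult.assoc)
  have a: "(u2 + w * u1) * v2 = 1" by (simp add: distrib_right o22 o12 mult.assoc)
  have b: "(u2 + w * u1) * Y' = 0" by (simp add: distrib_right Y1 Y2 mult.assoc)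
  have "P (u2 + w * u1) * Q Y' = 0" by (rule mu[OF a b])
  moreover have "P u2 * Q Y' = 0" by (rule mu[OF o22 Y2])
  ultimately have N: "P (w * u1) * Q Y' = 0" by (simp add: addP distrib_right)
  have "Y = Y' + v2 * (u2 * Y)" unfolding Y'_def by simp
  hence "Q Y = Q Y' + Q (v2 * (u2 * Y))" using addQ by (metis arg_cong)
  thus ?thesis using N C2[of w "u2 * Y"] by (simp add: distrib_left)
qed

lemma mainPQ: "P x * Q y = P (x * y * u1) * Q v1"
proof -
  define e where "e = v1 * u1"
  have ev: "(1 - e) * v1 = 0" unfolding e_def by (simp add: left_diff_distrib mult.assoc o11)
  have ue: "u1 * (1 - e) = 0" unfolding e_def by (simp add: right_diff_distrib o11 flip: mult.assoc)
  have ee: "(1 - e) * (1 - e) = 1 - e"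
  proof -
    have "(1 - e) * e = ((1 - e) * v1) * u1" unfolding e_def by (simp add: mult.assoc)
    hence "(1 - e) * e = 0" using ev by simp
    thus ?thesis by (simp add: right_diff_distrib)
  qed
  have X0: "x * (1 - e) * v1 = 0" using ev by (simp add: mult.assoc)
  have Y0: "u1 * ((1 - e) * y) = 0" using ue by (simp flip: mult.assoc)
  have T1: "P (x * (1 - e)) * Q ((1 - e) * y) = P (x * (1 - e) * y * u1) * Q v1"
  proof -
    have "P (x * (1 - e)) * Q ((1 - e) * y) = P (x * (1 - e) * ((1 - e) * y) * u1) * Q v1"
      by (rule DE(1)[OF o11 X0 Y0])
    also have "x * (1 - e) * ((1 - e) * y) = x * (1 - e) * y"
      using ee by (metis mult.assoc)
    finally show ?thesis .
  qed
  have xd: "x = x * (1 - e) + (x * v1) * u1" unfolding e_def by (simp add: algebra_simps)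
  have yd: "y = (1 - e) * y + v1 * (u1 * y)" unfolding e_def by (simp add: algebra_simps)
  have "P x * Q y = (P (x * (1 - e)) + P ((x * v1) * u1)) * (Q ((1 - e) * y) + Q (v1 * (u1 * y)))"
    using arg_cong[OF xd, of P] arg_cong[OF yd, of Q] by (simp only: addP addQ)
  also have "\<dots> = P (x * (1 - e)) * Q ((1 - e) * y) + P (x * (1 - e)) * Q (v1 * (u1 * y))
     + P ((x * v1) * u1) * Q ((1 - e) * y) + P ((x * v1) * u1) * Q (v1 * (u1 * y))"
    by (simp add: algebra_simps)
  also have "\<dots> = P (x * (1 - e) * y * u1) * Q v1 + P (x * v1 * (u1 * y) * u1) * Q v1"
    using T1 T2[OF o11 o22 o12 o21 X0] T3[OF Y0] K1 by simp
  also have "\<dots> = P (x * (1 - e) * y * u1 + x * v1 * (u1 * y) * u1) * Q v1"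
    by (simp add: addP distrib_right)
  also have "x * (1 - e) * y * u1 + x * v1 * (u1 * y) * u1 = x * y * u1"
    unfolding e_def by (simp add: algebra_simps)
  finally show ?thesis .
qed

lemma final: "P x * Q y = P (x * y) * Q 1"
  using mainPQ[of x y] mainPQ[of "x * y" 1] by simp

end

end



lemma cstar_zero: "cstar (0::'a::cstar_algebra) = 0"
  using cstar_add[of "0::'a" 0] by simp

lemma cstar_minus: "cstar (- x::'a::cstar_algebra) = - cstar x"
  using cstar_add[of x "-x"] cstar_zero by (metis neg_eq_iff_add_eq_0 add.right_inverse)

lemma cstar_diff: "cstar (x - y::'a::cstar_algebra) = cstar x - cstar y"
  using cstar_add[of x "-y"] cstar_minus[of y] by simp

lemma cstar_one: "cstar (1::'a::cstar_algebra_1) = 1"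
proof -
  have "cstar (1::'a) = cstar 1 * cstar (cstar 1)" by (metis cstar_cstar mult.right_neutral)
  also have "\<dots> = cstar (cstar 1 * 1)" by (rule cstar_mult[symmetric])
  also have "\<dots> = 1" by (simp add: cstar_cstar)
  finally show ?thesis .
qed




inductive_set Jset :: "'a::ring \<Rightarrow> 'a set" for p :: 'a where
  base: "x * p * y \<in> Jset p"
| plus: "a \<in> Jset p \<Longrightarrow> b \<in> Jset p \<Longrightarrow> a + b \<in> Jset p"

lemma Jset_zero: "0 \<in> Jset p" using Jset.base[of 0 p 0] by simp

lemma Jset_lmult: "x \<in> Jset p \<Longrightarrow> a * x \<in> Jset p"
proof (induction rule: Jset.induct)
  case (base x y) thus ?case by (metis Jset.base mult.assoc)
next
  case (plus u v) thus ?case by (simp add: distrib_left Jset.plus)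
qed

lemma Jset_rmult: "x \<in> Jset p \<Longrightarrow> x * a \<in> Jset p"
proof (induction rule: Jset.induct)
  case (base x y) thus ?case by (metis Jset.base mult.assoc)
next
  case (plus u v) thus ?case by (simp add: distrib_right Jset.plus)
qed

lemma Jset_scaleC: "(x::'a::cstar_algebra) \<in> Jset p \<Longrightarrow> scaleC c x \<in> Jset p"
proof (induction rule: Jset.induct)
  case (base x y) thus ?case by (metis Jset.base scaleC_mult_left)
next
  case (plus u v) thus ?case by (simp add: scaleC_add_right Jset.plus)
qed

lemma pow_ts: fixes s t :: "'a::ring_1" assumes "t * s = 1" shows "t ^ k * s ^ k = 1"
proof (induction k)
  case 0 thus ?case by simp
next
  case (Suc k)
  have "t ^ Suc k * s ^ Suc k = t ^ k * (t * s) * s ^ k"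
    by (simp only: power_Suc2[of t] power_Suc[of s] mult.assoc)
  thus ?case using Suc assms by simp
qed

lemma pow_ts2: fixes s t :: "'a::ring_1" assumes "t * s = 1" "k \<le> m"
  shows "t ^ k * s ^ m = s ^ (m - k)"
proof -
  have "s ^ m = s ^ k * s ^ (m - k)" using assms(2) by (metis le_add_diff_inverse power_add)
  hence "t ^ k * s ^ m = (t ^ k * s ^ k) * s ^ (m - k)" by (simp add: mult.assoc)
  thus ?thesis using pow_ts[OF assms(1)] by simp
qed

lemma pow_ts3: fixes s t :: "'a::ring_1" assumes "t * s = 1" "k \<le> m"
  shows "t ^ m * s ^ k = t ^ (m - k)"
proof -
  have "t ^ m = t ^ (m - k) * t ^ k" using assms(2) by (metis le_add_diff_inverse2 power_add)
  hence "t ^ m * s ^ k = t ^ (m - k) * (t ^ k * s ^ k)" by (simp add: mult.assoc)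
  thus ?thesis using pow_ts[OF assms(1)] by simp
qed

lemma decomp:
  fixes s t p :: "'a::ring_1"
  assumes ts: "t * s = 1" and ps: "p * s = 0" and tp: "t * p = 0" and pp: "p * p = p"
  shows "x \<in> Jset p \<Longrightarrow> \<exists>n X Y. X * Y = x \<and> (\<forall>m\<ge>n. X * s ^ m = 0 \<and> t ^ m * Y = 0)"
proof (induction rule: Jset.induct)
  case (base x y)
  define X where "X = x * p * t"
  define Y where "Y = s * p * y"
  have "X * Y = x * (p * (t * s) * p) * y" unfolding X_def Y_def by (simp add: mult.assoc)
  also have "\<dots> = x * p * y" using ts pp by (simp add: mult.assoc)
  finally have XY: "X * Y = x * p * y" .
  have "X * s ^ m = 0 \<and> t ^ m * Y = 0" if "m \<ge> 2" for m
  proof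
    have "X * s ^ m = x * p * (t * s ^ m)" unfolding X_def by (simp add: mult.assoc)
    also have "t * s ^ m = s ^ (m - 1)" using pow_ts2[OF ts, of 1 m] that by simp
    also have "s ^ (m - 1) = s * s ^ (m - 2)" using that
      by (metis Suc_diff_Suc numeral_2_eq_2 diff_Suc_1 less_le_trans lessI power_Suc pos2 Suc_1)
    finally show "X * s ^ m = 0" using ps by (metis mult.assoc mult_zero_left mult_zero_right)
    have "t ^ m * Y = (t ^ m * s) * p * y" unfolding Y_def by (simp add: mult.assoc)
    also have "t ^ m * s = t ^ (m - 1)" using pow_ts3[OF ts, of 1 m] that by simp
    also have "t ^ (m - 1) = t ^ (m - 2) * t" using that
      by (metis Suc_diff_Suc numeral_2_eq_2 diff_Suc_1 less_le_trans lessI power_Suc2 pos2 Suc_1)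
    finally show "t ^ m * Y = 0" using tp by (simp add: mult.assoc)
  qed
  thus ?case using XY by blast
next
  case (plus a b)
  from plus.IH(1) obtain n1 X1 Y1 where h1: "X1 * Y1 = a" "\<forall>m\<ge>n1. X1 * s ^ m = 0 \<and> t ^ m * Y1 = 0" by blast
  from plus.IH(2) obtain n2 X2 Y2 where h2: "X2 * Y2 = b" "\<forall>m\<ge>n2. X2 * s ^ m = 0 \<and> t ^ m * Y2 = 0" by blast
  define X where "X = X1 + X2 * t ^ n1"
  define Y where "Y = Y1 + s ^ n1 * Y2"
  have z1: "X1 * s ^ n1 = 0" "t ^ n1 * Y1 = 0" using h1 by auto
  have "X * Y = X1 * Y1 + (X1 * s ^ n1) * Y2 + X2 * (t ^ n1 * Y1) + X2 * (t ^ n1 * s ^ n1) * Y2"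
    unfolding X_def Y_def by (simp add: algebra_simps)
  also have "\<dots> = a + b" using z1 h1 h2 pow_ts[OF ts, of n1] by simp
  finally have XY: "X * Y = a + b" .
  have "X * s ^ m = 0 \<and> t ^ m * Y = 0" if "m \<ge> n1 + n2" for m
  proof
    have "X * s ^ m = X1 * s ^ m + X2 * (t ^ n1 * s ^ m)" unfolding X_def by (simp add: algebra_simps)
    also have "t ^ n1 * s ^ m = s ^ (m - n1)" using pow_ts2[OF ts, of n1 m] that by simp
    finally show "X * s ^ m = 0" using h1 h2 that by simp
    have "t ^ m * Y = t ^ m * Y1 + (t ^ m * s ^ n1) * Y2" unfolding Y_def by (simp add: algebra_simps)
    also have "t ^ m * s ^ n1 = t ^ (m - n1)" using pow_ts3[OF ts, of n1 m] that by simp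
    finally show "t ^ m * Y = 0" using h1 h2 that by simp
  qed
  thus ?case using XY by blast
qed

lemma closure_pres:
  assumes "continuous_on UNIV f" "\<And>x. x \<in> S \<Longrightarrow> f x \<in> closure S" "x \<in> closure S"
  shows "f x \<in> closure S"
proof -
  have "f ` closure S \<subseteq> closure S"
    by (rule image_closure_subset) (use assms in \<open>auto intro: continuous_on_subset\<close>)
  thus ?thesis using assms(3) by blast
qed

lemma scaleC_bl: "bounded_linear (scaleC c :: 'a::cstar_algebra \<Rightarrow> 'a)"
proof (rule bounded_linear_intro[where K = "cmod c"])
  fix x y :: 'a show "scaleC c (x + y) = scaleC c x + scaleC c y" by (rule scaleC_add_right)
next
  fix r and x :: 'a
  show "scaleC c (scaleR r x) = scaleR r (scaleC c x)"
    by (simp add: scaleR_scaleC scaleC_scaleC mult.commute)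
next
  fix x :: 'a show "norm (scaleC c x) \<le> norm x * cmod c" by (simp add: norm_scaleC mult.commute)
qed

lemma neumann:
  fixes j :: "'a::{real_normed_algebra_1,banach}"
  assumes "norm (1 - j) < 1" shows "\<exists>g. j * g = 1"
proof -
  define r where "r = 1 - j"
  have nr: "norm r < 1" using assms r_def by simp
  have sg: "summable (\<lambda>n. norm r ^ n)" using nr by (simp add: summable_geometric)
  have sm: "summable (\<lambda>n. r ^ n)"
    by (rule summable_comparison_test'[OF sg]) (rule norm_power_ineq)
  define g where "g = (\<Sum>n. r ^ n)"
  have "r * g = (\<Sum>n. r * r ^ n)" unfolding g_def using suminf_mult[OF sm] by simp
  also have "\<dots> = (\<Sum>n. r ^ Suc n)" by simp
  also have "\<dots> = g - 1" unfolding g_def using suminf_split_head[OF sm] by simp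
  finally have "r * g = g - 1" .
  hence "j * g = 1" unfolding r_def by (simp add: left_diff_distrib)
  thus ?thesis by blast
qed

lemma exists_sys':
  assumes "cstar_simple TYPE('a::cstar_algebra_1)" "cstar_infinite TYPE('a)"
  shows "\<exists>u1 v1 u2 v2::'a. u1 * v1 = 1 \<and> u2 * v2 = 1 \<and> u1 * v2 = 0 \<and> u2 * v1 = 0"
proof -
  have pj1: "projection (1::'a)" unfolding projection_def by (simp add: cstar_one)
  obtain q :: 'a where q: "subprojection q 1" "mvn_equiv 1 q" "q \<noteq> 1"
    using assms(2) pj1 unfolding cstar_infinite_def finite_projection_def by blast
  obtain s :: 'a where s: "cstar s * s = 1" "s * cstar s = q" using q(2) unfolding mvn_equiv_def by blast
  define t where "t = cstar s"
  define p where "p = 1 - s * t"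
  have ts: "t * s = 1" using s t_def by simp
  have ps: "p * s = 0" unfolding p_def using ts by (simp add: left_diff_distrib mult.assoc)
  have tp: "t * p = 0" unfolding p_def using ts by (simp add: right_diff_distrib flip: mult.assoc)
  have pp: "p * p = p"
  proof -
    have "p * p = p - (p * s) * t" unfolding p_def by (simp add: right_diff_distrib mult.assoc)
    thus ?thesis using ps by simp
  qed
  have pn0: "p \<noteq> 0" using q(3) s t_def unfolding p_def by simp
  define K where "K = closure (Jset p)"
  have JK: "x \<in> Jset p \<Longrightarrow> x \<in> K" for x unfolding K_def using closure_subset by blast
  have addK: "x + y \<in> K" if "x \<in> K" "y \<in> K" for x y
  proof -
    have a1: "a + y \<in> K" if "a \<in> Jset p" "y \<in> K" for a y
    proof -
      have c: "continuous_on UNIV (\<lambda>y. a + y)" by (intro continuous_intros)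
      have "a + x \<in> closure (Jset p)" if "x \<in> Jset p" for x
        using Jset.plus[OF \<open>a \<in> Jset p\<close> that] closure_subset by blast
      thus ?thesis using closure_pres[OF c, of "Jset p" y] that unfolding K_def by blast
    qed
    have c: "continuous_on UNIV (\<lambda>x. x + y)" by (intro continuous_intros)
    have "x' + y \<in> closure (Jset p)" if "x' \<in> Jset p" for x'
      using a1[OF that \<open>y \<in> K\<close>] unfolding K_def .
    thus ?thesis using closure_pres[OF c, of "Jset p" x] that unfolding K_def by blast
  qed
  have scK: "scaleC c x \<in> K" if "x \<in> K" for c x
    using closure_pres[of "scaleC c" "Jset p" x] that unfolding K_def
    by (auto intro: linear_continuous_on[OF scaleC_bl] Jset_scaleC closure_subset[THEN subsetD])
  have lK: "a * x \<in> K" if "x \<in> K" for a x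
    using closure_pres[of "\<lambda>x. a * x" "Jset p" x] that unfolding K_def
    by (auto intro!: continuous_intros intro: Jset_lmult closure_subset[THEN subsetD])
  have rK: "x * a \<in> K" if "x \<in> K" for a x
  proof -
    have c: "continuous_on UNIV (\<lambda>x. x * a)" by (intro continuous_intros)
    have "x' * a \<in> closure (Jset p)" if "x' \<in> Jset p" for x'
      using Jset_rmult[OF that] closure_subset by blast
    thus ?thesis using closure_pres[OF c, of "Jset p" x] that unfolding K_def by blast
  qed
  have cK: "closed K" unfolding K_def by simp
  have "closed_ideal K" unfolding closed_ideal_def
  proof (intro conjI ballI allI)
    show "0 \<in> K" by (rule JK[OF Jset_zero])
  qed (simp_all add: addK scK lK rK cK)
  hence "K = {0} \<or> K = UNIV" using assms(1) unfolding cstar_simple_def by blast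
  moreover have "p \<in> K" using JK Jset.base[of 1 p 1] by simp
  ultimately have "K = UNIV" using pn0 by blast
  hence "1 \<in> closure (Jset p)" unfolding K_def by simp
  hence "\<forall>e>0. \<exists>y\<in>Jset p. dist y 1 < e" by (simp only: closure_approachable)
  then obtain j where j: "j \<in> Jset p" "dist j 1 < 1" using zero_less_one by blast
  have "norm (1 - j) < 1" using j(2) by (simp add: dist_norm norm_minus_commute)
  then obtain g where "j * g = 1" using neumann by blast
  hence "1 \<in> Jset p" using Jset_rmult[OF j(1)] by metis
  then obtain n X Y where XY: "X * Y = 1" "\<forall>m\<ge>n. X * s ^ m = 0 \<and> t ^ m * Y = 0"
    using decomp[OF ts ps tp pp] by blast
  have "t ^ n * s ^ n = 1" by (rule pow_ts[OF ts])
  thus ?thesis using XY by blast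
qed


theorem theorem2p8:
  fixes T :: "'a::cstar_algebra_1 \<Rightarrow> 'b::cstar_algebra"
  assumes "cstar_simple TYPE('a)"
    and "cstar_infinite TYPE('a)"
    and "clinear_map T"
  shows "star_hom T \<longleftrightarrow> star_hom_at T 1"
proof
  assume H: "star_hom T"
  hence m: "T (x * y) = T x * T y" and s: "T (cstar x) = cstar (T x)" for x y
    unfolding star_hom_def by auto
  show "star_hom_at T 1" unfolding star_hom_at_def
    by (metis m s)
next
  assume H: "star_hom_at T 1"
  obtain u1 v1 u2 v2 :: 'a where o: "u1 * v1 = 1" "u2 * v2 = 1" "u1 * v2 = 0" "u2 * v1 = 0"
    using exists_sys'[OF assms(1,2)] by blast
  define h where "h = T 1"
  define Tc where "Tc = (\<lambda>x. cstar (T (cstar x)))"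
  have addT: "T (x + y) = T x + T y" for x y using assms(3) unfolding clinear_map_def by blast
  have addTc: "Tc (x + y) = Tc x + Tc y" for x y unfolding Tc_def by (simp add: cstar_add addT)
  have R: "T a * Tc b = h" if "a * b = 1" for a b
  proof -
    have "a * cstar (cstar b) = 1" using that by (simp add: cstar_cstar)
    thus ?thesis using H unfolding star_hom_at_def Tc_def h_def by blast
  qed
  have L: "Tc a * T b = h" if "a * b = 1" for a b
  proof -
    have "cstar (cstar a) * b = 1" using that by (simp add: cstar_cstar)
    thus ?thesis using H unfolding star_hom_at_def Tc_def h_def by blast
  qed
  interpret r: pq T Tc h using addT addTc R by unfold_locales auto
  interpret l: pq Tc T h using addT addTc L by unfold_locales auto
  have FR: "T x * Tc y = T (x * y) * Tc 1" for x y by (rule r.final[OF o])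
  have FL: "Tc x * T y = Tc (x * y) * T 1" for x y by (rule l.final[OF o])
  have Tc1: "Tc 1 = cstar h" unfolding Tc_def h_def by (simp add: cstar_one)
  have hh0: "h * cstar h = h" using R[of 1 1] Tc1 h_def by simp
  have hs: "cstar h = h"
  proof -
    have "cstar h = cstar (h * cstar h)" using hh0 by simp
    also have "\<dots> = h * cstar h" by (simp add: cstar_mult cstar_cstar)
    finally show ?thesis using hh0 by simp
  qed
  have hh: "h * h = h" using hh0 hs by simp
  have FR': "T x * Tc y = T (x * y) * h" for x y using FR Tc1 hs by simp
  have FL0: "Tc x * T y = Tc (x * y) * h" for x y using FL h_def by simp
  have R1: "h * Tc y = T y * h" for y using FR'[of 1 y] h_def by simp
  have L1: "h * T y = Tc y * h" for y using FL0[of 1 y] h_def Tc1 hs by simp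
  have FL': "Tc x * T y = h * T (x * y)" for x y using FL0 L1 by simp
  have Th: "T x * h = T x" for x
  proof -
    define D where "D = T x - T x * h"
    define C where "C = cstar (T x)"
    define W where "W = T (cstar x * x)"
    have CT: "C * T x = h * W" unfolding C_def W_def
      using FL'[of "cstar x" x] by (simp add: Tc_def cstar_cstar)
    have cD: "cstar D = C - h * C" unfolding D_def C_def by (simp add: cstar_diff cstar_mult hs)
    have "cstar D * D = C * T x - (C * T x) * h - h * (C * T x) + h * (C * T x) * h"
      by (simp only: cD) (simp add: D_def algebra_simps)
    also have "\<dots> = h * W - h * W * h - (h * h) * W + (h * h) * W * h"
      unfolding CT by (simp add: mult.assoc)
    also have "\<dots> = 0" using hh by simp
    finally have "norm (cstar D * D) = 0" by simp
    hence "norm D = 0" by (simp add: cstar_identity)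
    thus ?thesis unfolding D_def by simp
  qed
  have TcT: "Tc y = T y" for y
  proof -
    have "Tc y = cstar (T (cstar y) * h)" unfolding Tc_def using Th by simp
    also have "\<dots> = h * Tc y" by (simp add: cstar_mult hs Tc_def)
    also have "\<dots> = T y" using R1 Th by simp
    finally show ?thesis .
  qed
  have mult: "T (x * y) = T x * T y" for x y using FR'[of x y] TcT Th by simp
  have star: "T (cstar x) = cstar (T x)" for x using TcT[of "cstar x"] by (simp add: Tc_def cstar_cstar)
  show "star_hom T" unfolding star_hom_def using assms(3) mult star by blast
qed


end
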